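(* Let $r$, $s$, $k$ and $n$ be positive integers with $r<k<n$ and $s+1<n$. Let $d=\gcd(s+1,n)$. If \[ k(s+1)+d-3\leq rn-1, \] then there exists an $(s,k,r)$-clash-free permutation of $\mathbb{Z}_n$.
   Context: For integers $u\leq v$, $[u,v]$ denotes the set of integers $i$ with $u\leq i\leq v$. For a subset $X\subseteq\mathbb{Z}_n$, define $||X||_n=\min\{t\in\mathbb{Z}\mid X\subseteq x+[0,t]\bmod n \text{ for some } x\in\mathbb{Z}_n\}$. For a permutation $\pi$ of $\mathbb{Z}_n$, an $(s,k,r)$-clash is a subset $X\subseteq\mathbb{Z}_n$ of cardinality $r+1$ such that $||X||_n<s$ and $||\pi(X)||_n<k$. The permutation $\pi$ is $(s,k,r)$-clash-free if it has no $(s,k,r)$-clashes. *)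

theory Defs
  imports Main
begin

text \<open>Z_n is modelled as the carrier {0..<n} of natural numbers with arithmetic mod n.\<close>

definition cyc_interval :: "nat \<Rightarrow> nat \<Rightarrow> nat \<Rightarrow> nat set" where
  "cyc_interval n x t = {(x + i) mod n | i. i \<le> t}"

definition cyc_norm :: "nat \<Rightarrow> nat set \<Rightarrow> nat" where
  "cyc_norm n X = (LEAST t. \<exists>x<n. X \<subseteq> cyc_interval n x t)"

definition is_clash :: "nat \<Rightarrow> (nat \<Rightarrow> nat) \<Rightarrow> nat \<Rightarrow> nat \<Rightarrow> nat \<Rightarrow> nat set \<Rightarrow> bool" where
  "is_clash n \<pi> s k r X \<longleftrightarrow> X \<subseteq> {0..<n} \<and> card X = r + 1 \<and>
     cyc_norm n X < s \<and> cyc_norm n (\<pi> ` X) < k"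

definition clash_free :: "nat \<Rightarrow> (nat \<Rightarrow> nat) \<Rightarrow> nat \<Rightarrow> nat \<Rightarrow> nat \<Rightarrow> bool" where
  "clash_free n \<pi> s k r \<longleftrightarrow> \<not> (\<exists>X. is_clash n \<pi> s k r X)"

end

theory Submission
  imports Defs "HOL-Computational_Algebra.Primes"
begin

lemma divm_mono:
  fixes a b m :: int
  assumes "m \<ge> 1" "a \<le> b"
  shows "b div m - a div m \<le> b - a"
  using assms(2)
proof (induction b rule: int_ge_induct)
  case base
  then show ?case by simp
next
  case (step i)
  have "(i + 1) div m \<le> (i + m) div m" using assms(1) by (simp add: zdiv_mono1)
  also have "\<dots> = i div m + 1" using assms(1) by (subst div_add_self2) auto
  finally show ?case using step by simp
qed

lemma step_hi:
  fixes a b m d n :: int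
  assumes "m \<ge> 1" "d \<ge> 1" "n = d * m" "a \<le> b" "a div n < b div n"
  shows "a div m < b div m"
  by (smt (verit, best) assms mult.commute zdiv_mono1 zdiv_zmult2_eq)

lemma step_n:
  fixes a b n :: int
  assumes "n \<ge> 1" "a \<le> b" "b - a < n"
  shows "b div n \<le> a div n + 1"
  by (smt (verit) assms div_add_self2 zdiv_mono1)

lemma Pshift:
  fixes s d m n y :: int
  assumes "m \<ge> 1" "d \<ge> 1" "n = d * m"
  shows "(s + 1) * y - y div m + d * (y div n)
       = ((s + 1) * (y mod n) - (y mod n) div m + d * ((y mod n) div n)) + (s+1) * n * (y div n)"
proof -
  have n: "n \<ge> 1" using assms mult_mono[of 1 d 1 m] by simp
  define q where "q = y div n"
  define r where "r = y mod n"
  have y: "y = r + m * (d * q)" unfolding q_def r_def using assms(3) mod_div_mult_eq[of y n] by (simp add: algebra_simps)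
  have "y div m = r div m + d * q" unfolding y using assms(1) by simp
  moreover have "r div n = 0" unfolding r_def using n by simp
  ultimately show ?thesis unfolding q_def[symmetric] r_def[symmetric] using y assms(3)
    by (simp add: algebra_simps)
qed

lemma Pmono:
  fixes s d m n a b :: int
  assumes "m \<ge> 1" "d \<ge> 1" "n = d * m" "a \<le> b"
  shows "s * (b - a) \<le> ((s + 1) * b - b div m + d * (b div n)) - ((s + 1) * a - a div m + d * (a div n))"
proof -
  have n: "n \<ge> 1" using assms mult_mono[of 1 d 1 m] by simp
  have 1: "b div m - a div m \<le> b - a" using divm_mono assms by blast
  have 2: "a div n \<le> b div n" using assms(4) n by (simp add: zdiv_mono1)
  have 3: "d * (b div n - a div n) \<ge> 0" using 2 assms(2) by simp
  show ?thesis using 1 3 by (simp add: algebra_simps)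
qed

lemma Pupper:
  fixes s d m n a b :: int
  assumes "m \<ge> 1" "d \<ge> 1" "n = d * m" "a \<le> b" "b - a < n"
  shows "((s + 1) * b - b div m + d * (b div n)) - ((s + 1) * a - a div m + d * (a div n)) \<le> (s + 1) * (b - a) + d - 1"
proof -
  have n: "n \<ge> 1" using assms mult_mono[of 1 d 1 m] by simp
  have 1: "a div m \<le> b div m" using assms(4) assms(1) by (simp add: zdiv_mono1)
  have 2: "a div n \<le> b div n" using assms(4) n by (simp add: zdiv_mono1)
  have 3: "b div n \<le> a div n + 1" using step_n n assms by blast
  show ?thesis
  proof (cases "a div n = b div n")
    case True
    then show ?thesis using 1 assms(2) by (simp add: algebra_simps)
  next
    case False
    then have "b div n = a div n + 1" using 2 3 by simp
    moreover have "a div m < b div m" using step_hi[OF assms(1-4)] False 2 by simp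
    ultimately show ?thesis by (simp add: algebra_simps)
  qed
qed

lemma small_dvd:
  fixes d x :: int
  assumes "d dvd x" "\<bar>x\<bar> < d"
  shows "x = 0"
  by (metis assms(1,2) dvd_abs_iff zdvd_not_zless zero_less_abs_iff)

lemma Pinj:
  fixes s d m n y1 y2 :: int
  assumes "m \<ge> 1" "d \<ge> 1" "n = d * m" "s + 1 = d * a" "coprime a m"
    "0 \<le> y1" "y1 < n" "0 \<le> y2" "y2 < n"
    "((s + 1) * y1 - y1 div m) mod n = ((s + 1) * y2 - y2 div m) mod n"
  shows "y1 = y2"
proof -
  have "n dvd ((s + 1) * y1 - y1 div m) - ((s + 1) * y2 - y2 div m)"
    using assms(10) by (simp add: mod_eq_dvd_iff)
  moreover have "(s+1)*y1 - (s+1)*y2 = d*(a*(y1-y2))" using assms(4)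
    by (metis mult.assoc right_diff_distrib)
  ultimately have dv: "d * m dvd d * (a * (y1 - y2)) - (y1 div m - y2 div m)"
    using assms(3) by (smt (verit))
  then have "d dvd d * (a * (y1 - y2)) - (y1 div m - y2 div m)"
    using dvd_mult_left by blast
  from dvd_diff[OF dvd_triv_left[of d "a * (y1 - y2)"] this]
  have "d dvd (y1 div m - y2 div m)" by simp
  moreover have "0 \<le> y1 div m" "0 \<le> y2 div m" using assms(1,6,8)
    by (simp_all add: pos_imp_zdiv_nonneg_iff)
  moreover have "y1 div m < d" using assms(1,6,7,3)
    by (smt (verit) div_mod_decomp_int mult_right_less_imp_less pos_mod_sign)
  moreover have "y2 div m < d" using assms(1,8,9,3)
    by (smt (verit) div_mod_decomp_int mult_right_less_imp_less pos_mod_sign)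
  ultimately have q: "y1 div m = y2 div m" using small_dvd[of d "y1 div m - y2 div m"] by simp
  then have "d * m dvd d * (a * (y1 - y2))" using dv by simp
  then have "m dvd a * (y1 - y2)" using assms(2) by simp
  then have "m dvd (y1 - y2)" using assms(5) by (simp add: coprime_dvd_mult_right_iff coprime_commute)
  moreover have "y1 - y2 = y1 mod m - y2 mod m" using q
    by (metis div_mult_mod_eq add_diff_cancel_left diff_add_cancel add.commute)
  moreover have "\<bar>y1 mod m - y2 mod m\<bar> < m"
    using assms(1) pos_mod_sign[of m y1] pos_mod_sign[of m y2] pos_mod_bound[of m y1] pos_mod_bound[of m y2]
    by linarith
  ultimately show ?thesis using small_dvd[of m "y1 - y2"] by simp
qed

lemma norm_ext:
  assumes "X \<subseteq> {0..<n}" "0 < n" "cyc_norm n X < s"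
  shows "\<exists>x<n. X \<subseteq> cyc_interval n x (s - 1)"
proof -
  have ex: "\<exists>x<n. X \<subseteq> cyc_interval n x (n - 1)"
  proof (intro exI conjI)
    show "0 < n" by fact
    show "X \<subseteq> cyc_interval n 0 (n - 1)"
    proof
      fix z assume "z \<in> X"
      then have "z < n" using assms(1) by auto
      then show "z \<in> cyc_interval n 0 (n - 1)"
        unfolding cyc_interval_def by (intro CollectI exI[of _ z]) auto
    qed
  qed
  then have "\<exists>x<n. X \<subseteq> cyc_interval n x (cyc_norm n X)"
    using LeastI_ex[of "\<lambda>t. \<exists>x<n. X \<subseteq> cyc_interval n x t"] ex unfolding cyc_norm_def by blast
  then obtain x where x: "x < n" "X \<subseteq> cyc_interval n x (cyc_norm n X)" by blast
  have "cyc_interval n x (cyc_norm n X) \<subseteq> cyc_interval n x (s - 1)"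
    using assms(3) unfolding cyc_interval_def by force
  then show ?thesis using x by blast
qed

theorem theorem4:
  fixes r s k n :: nat
  assumes "0 < r" "0 < s" "0 < k" "0 < n"
    and "r < k" "k < n" "s + 1 < n"
    and "int k * (int s + 1) + int (gcd (s + 1) n) - 3 \<le> int r * int n - 1"
  shows "\<exists>\<pi>. bij_betw \<pi> {0..<n} {0..<n} \<and> clash_free n \<pi> s k r"
proof -
  define d where "d = gcd (s + 1) n"
  define m where "m = n div d"
  define a where "a = (s + 1) div d"
  have d1: "d \<ge> 1" unfolding d_def using assms(4) by (simp add: Suc_leI)
  have nd: "n = d * m" unfolding m_def d_def by simp
  have sa: "s + 1 = d * a" unfolding a_def d_def by simp
  have m1: "m \<ge> 1" using nd assms(4) by (simp add: Suc_leI)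
  have cop: "coprime a m" unfolding a_def m_def d_def by (rule div_gcd_coprime) simp
  have dI: "int d \<ge> 1" "int m \<ge> 1" "int n = int d * int m" "int s + 1 = int d * int a"
     "coprime (int a) (int m)"
  proof -
    show "int d \<ge> 1" "int m \<ge> 1" using d1 m1 by simp_all
    show "int n = int d * int m" using nd by (metis of_nat_mult)
    show "int s + 1 = int d * int a" using sa by (metis of_nat_mult of_nat_add of_nat_1)
    show "coprime (int a) (int m)" using cop by simp
  qed
  define P :: "int \<Rightarrow> int" where
    "P y = (int s + 1) * y - y div int m + int d * (y div int n)" for y
  define \<sigma> where "\<sigma> y = nat (P (int y) mod int n)" for y
  have Pmod: "P z mod int n = P (z mod int n) mod int n" for z
  proof -
    have "P z = P (z mod int n) + (int s + 1) * int n * (z div int n)"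
      unfolding P_def using Pshift[OF dI(2) dI(1) dI(3)] by simp
    also have "\<dots> = P (z mod int n) + ((int s + 1) * (z div int n)) * int n"
      by (simp add: algebra_simps)
    finally show ?thesis by (simp only: mod_mult_self1)
  qed
  have Psmall: "0 \<le> y \<Longrightarrow> y < int n \<Longrightarrow> P y = (int s + 1) * y - y div int m" for y
    unfolding P_def by simp
  have \<sigma>_range: "\<sigma> y < n" for y
    unfolding \<sigma>_def using assms(4) by (simp add: nat_less_iff)
  have \<sigma>_inj: "inj_on \<sigma> {0..<n}"
  proof (rule inj_onI)
    fix y1 y2 assume y: "y1 \<in> {0..<n}" "y2 \<in> {0..<n}" "\<sigma> y1 = \<sigma> y2"
    then have "P (int y1) mod int n = P (int y2) mod int n"
      unfolding \<sigma>_def using assms(4)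
      by (metis of_nat_0_less_iff pos_mod_sign int_nat_eq)
    then have "((int s + 1) * int y1 - int y1 div int m) mod int n
        = ((int s + 1) * int y2 - int y2 div int m) mod int n"
      using Psmall y by simp
    from Pinj[OF dI(2) dI(1) dI(3) dI(4) dI(5) _ _ _ _ this] y
    show "y1 = y2" by simp
  qed
  have \<sigma>_bij: "bij_betw \<sigma> {0..<n} {0..<n}"
  proof -
    have "\<sigma> ` {0..<n} \<subseteq> {0..<n}" using \<sigma>_range by auto
    then have "\<sigma> ` {0..<n} = {0..<n}" using \<sigma>_inj endo_inj_surj[of "{0..<n}" \<sigma>] by auto
    then show ?thesis unfolding bij_betw_def using \<sigma>_inj by auto
  qed
  define \<pi> where "\<pi> = inv_into {0..<n} \<sigma>"
  have \<pi>_bij: "bij_betw \<pi> {0..<n} {0..<n}"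
    unfolding \<pi>_def using \<sigma>_bij by (simp add: bij_betw_inv_into)
  have \<sigma>\<pi>: "x < n \<Longrightarrow> \<sigma> (\<pi> x) = x" for x
    unfolding \<pi>_def using \<sigma>_bij by (simp add: bij_betw_def f_inv_into_f)
  have cf: "clash_free n \<pi> s k r"
    unfolding clash_free_def
  proof
    assume "\<exists>X. is_clash n \<pi> s k r X"
    then obtain X where X: "X \<subseteq> {0..<n}" "card X = r + 1" "cyc_norm n X < s"
      "cyc_norm n (\<pi> ` X) < k" unfolding is_clash_def by blast
    have fin: "finite X" using X(2) card.infinite by fastforce
    have \<pi>X: "\<pi> ` X \<subseteq> {0..<n}" using X(1) \<pi>_bij bij_betw_imp_surj_on by blast
    obtain w where w: "w < n" "X \<subseteq> cyc_interval n w (s - 1)"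
      using norm_ext[OF X(1) assms(4) X(3)] by blast
    obtain y where y: "y < n" "\<pi> ` X \<subseteq> cyc_interval n y (k - 1)"
      using norm_ext[OF \<pi>X assms(4) X(4)] by blast
    have "\<forall>x\<in>X. \<exists>i. i \<le> s - 1 \<and> x = (w + i) mod n"
      using w(2) unfolding cyc_interval_def by blast
    then obtain I where I: "\<And>x. x \<in> X \<Longrightarrow> I x \<le> s - 1 \<and> x = (w + I x) mod n"
      by metis
    have "\<forall>x\<in>X. \<exists>j. j \<le> k - 1 \<and> \<pi> x = (y + j) mod n"
      using y(2) unfolding cyc_interval_def by blast
    then obtain J where J: "\<And>x. x \<in> X \<Longrightarrow> J x \<le> k - 1 \<and> \<pi> x = (y + J x) mod n"
      by metis
    have key: "int x = P (int y + int (J x)) mod int n" if "x \<in> X" for x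
    proof -
      have "x = \<sigma> (\<pi> x)" using \<sigma>\<pi> X(1) that by auto
      also have "\<dots> = \<sigma> ((y + J x) mod n)" using J that by simp
      finally have "int x = P (int ((y + J x) mod n)) mod int n"
        unfolding \<sigma>_def using assms(4)
        by (metis of_nat_0_less_iff pos_mod_sign int_nat_eq)
      also have "\<dots> = P ((int y + int (J x)) mod int n) mod int n"
        by (simp add: of_nat_mod)
      also have "\<dots> = P (int y + int (J x)) mod int n" using Pmod by simp
      finally show ?thesis .
    qed
    define T where "T x = (P (int y + int (J x)) - int w - int (I x)) div int n" for x
    have PT: "P (int y + int (J x)) = int w + int (I x) + T x * int n" if "x \<in> X" for x
    proof -
      have "int x = (int w + int (I x)) mod int n" using I[OF that]
        by (metis of_nat_add of_nat_mod)
      then have "P (int y + int (J x)) mod int n = (int w + int (I x)) mod int n"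
        using key[OF that] by simp
      then have "int n dvd P (int y + int (J x)) - (int w + int (I x))"
        by (simp add: mod_eq_dvd_iff)
      then show ?thesis unfolding T_def by (simp add: algebra_simps)
    qed
    have Jinj: "x1 = x2" if "x1 \<in> X" "x2 \<in> X" "J x1 = J x2" for x1 x2
      using key[OF that(1)] key[OF that(2)] that(3) by simp
    have Pm: "int s * (b - a') \<le> P b - P a'" if "a' \<le> b" for a' b
      unfolding P_def using Pmono[OF dI(2) dI(1) dI(3) that] by simp
    have Pu: "P b - P a' \<le> (int s + 1) * (b - a') + int d - 1" if "a' \<le> b" "b - a' < int n" for a' b
      unfolding P_def using Pupper[OF dI(2) dI(1) dI(3) that] by simp
    have Tinj: "inj_on T X"
    proof (rule inj_onI)
      fix x1 x2 assume x: "x1 \<in> X" "x2 \<in> X" "T x1 = T x2"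
      have e: "P (int y + int (J x1)) - P (int y + int (J x2)) = int (I x1) - int (I x2)"
        using PT[OF x(1)] PT[OF x(2)] x(3) by simp
      have i1: "int (I x1) \<le> int s - 1" "int (I x2) \<le> int s - 1"
        using I x(1,2) assms(2) by fastforce+
      have "J x1 = J x2"
      proof (rule ccontr)
        assume "J x1 \<noteq> J x2"
        then consider "J x1 < J x2" | "J x2 < J x1" by linarith
        then show False
        proof cases
          case 1
          have "int s * (int (J x2) - int (J x1)) \<le> P (int y + int (J x2)) - P (int y + int (J x1))"
            using Pm[of "int y + int (J x1)" "int y + int (J x2)"] 1 by simp
          moreover have "int s * 1 \<le> int s * (int (J x2) - int (J x1))"
            using 1 by (intro mult_left_mono) auto
          ultimately show False using e i1 by simp
        next
          case 2
          have "int s * (int (J x1) - int (J x2)) \<le> P (int y + int (J x1)) - P (int y + int (J x2))"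
            using Pm[of "int y + int (J x2)" "int y + int (J x1)"] 2 by simp
          moreover have "int s * 1 \<le> int s * (int (J x1) - int (J x2))"
            using 2 by (intro mult_left_mono) auto
          ultimately show False using e i1 by simp
        qed
      qed
      then show "x1 = x2" using Jinj x by blast
    qed
    define S where "S = T ` X"
    have Sfin: "finite S" and Scard: "card S = r + 1"
      unfolding S_def using fin Tinj X(2) by (simp_all add: card_image)
    have Sne: "S \<noteq> {}" using Scard by auto
    define tmax where "tmax = Max S"
    define tmin where "tmin = Min S"
    have "S \<subseteq> {tmin..tmax}" unfolding tmax_def tmin_def using Sfin by auto
    then have "card S \<le> card {tmin..tmax}" by (rule card_mono[OF finite_atLeastAtMost_int])
    then have rt: "int r \<le> tmax - tmin" using Scard by simp
    obtain x1 where x1: "x1 \<in> X" "T x1 = tmax"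
      using Max_in[OF Sfin Sne] unfolding tmax_def S_def by auto
    obtain x2 where x2: "x2 \<in> X" "T x2 = tmin"
      using Min_in[OF Sfin Sne] unfolding tmin_def S_def by auto
    define j1 where "j1 = int y + int (J x1)"
    define j2 where "j2 = int y + int (J x2)"
    have e: "P j1 - P j2 = int (I x1) - int (I x2) + (tmax - tmin) * int n"
      using PT[OF x1(1)] PT[OF x2(1)] x1(2) x2(2) unfolding j1_def j2_def
      by (simp add: algebra_simps)
    have i2: "int (I x2) \<le> int s - 1"
      using I x2(1) assms(2) by fastforce
    have rn: "int r * int n \<le> (tmax - tmin) * int n"
      using rt by (intro mult_right_mono) auto
    have rn2: "int n \<le> int r * int n" using assms(1) mult_right_mono[of 1 "int r" "int n"] by simp
    have pos: "P j1 - P j2 > 0" using e i2 rn rn2 assms(7) by linarith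
    have "j2 < j1"
    proof (rule ccontr)
      assume "\<not> j2 < j1"
      then have "int s * (j2 - j1) \<le> P j2 - P j1" using Pm by simp
      moreover have "0 \<le> int s * (j2 - j1)" using \<open>\<not> j2 < j1\<close> by simp
      ultimately show False using pos by simp
    qed
    have jk: "j1 - j2 \<le> int k - 1"
      using J[OF x1(1)] J[OF x2(1)] unfolding j1_def j2_def using assms(3) by fastforce
    have "P j1 - P j2 \<le> (int s + 1) * (j1 - j2) + int d - 1"
      using Pu[of j2 j1] \<open>j2 < j1\<close> jk assms(6) by simp
    also have "(int s + 1) * (j1 - j2) \<le> (int s + 1) * (int k - 1)"
      using jk by (intro mult_left_mono) auto
    finally have up: "P j1 - P j2 \<le> (int s + 1) * (int k - 1) + int d - 1" by simp
    have "int r * int n - int s + 1 \<le> P j1 - P j2" using e i2 rn by simp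
    then have "int r * int n - int s + 1 \<le> (int s + 1) * (int k - 1) + int d - 1"
      using up by simp
    moreover have "(int s + 1) * (int k - 1) = int k * (int s + 1) - int s - 1"
      by (simp add: algebra_simps)
    ultimately show False using assms(8) unfolding d_def by simp
  qed
  show ?thesis using \<pi>_bij cf by blast
qed

end
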